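(* Let $(\mathcal{P},\mu)$ be an $n$-dimensional complex admissible Poisson algebra such that $\mathfrak{g}_{\mathcal{P}}$ is a rigid solvable Lie algebra of rank $r$, written $\mathfrak{g}_{\mathcal{P}}=\mathfrak{t}\oplus\mathfrak{n}$ with $\mathfrak{n}$ the nilradical and $\mathfrak{t}$ a maximal exterior torus ($\dim\mathfrak{t}=r$), and suppose that all roots of $\mathfrak{t}$ on $\mathfrak{n}$ (the weights $\lambda\in\mathfrak{t}^*$ in the decomposition of $\mathfrak{n}$ into simultaneous eigenspaces of $\mathrm{ad}\,\mathfrak{t}$) are non-zero. Then $\mathcal{A}_{\mathcal{P}}^2=\{0\}$ and $(\mathcal{P},\mu)$ is rigid.
   Context: Associator: $A(X,Y,Z)=(X\cdot Y)\cdot Z-X\cdot(Y\cdot Z)$. An admissible Poisson algebra is a vector space with bilinear product $\mu(X,Y)=X\cdot Y$ satisfying $3A(X,Y,Z)=(X\cdot Z)\cdot Y+(Y\cdot Z)\cdot X-(Y\cdot X)\cdot Z-(Z\cdot X)\cdot Y$; $\{X,Y\}=\frac12(X\cdot Y-Y\cdot X)$, $X\bullet Y=\frac12(X\cdot Y+Y\cdot X)$, $\mathfrak{g}_{\mathcal{P}}=(\mathcal{P},\{\,,\,\})$, $\mathcal{A}_{\mathcal{P}}=(\mathcal{P},\bullet)$. A maximal exterior torus of a Lie algebra $\mathfrak{g}$ is a maximal abelian subalgebra $\mathfrak{t}$ such that $\mathrm{ad}\,X$ is semisimple for all $X\in\mathfrak{t}$; its dimension is the rank. A (formal) deformation of $\mu$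 is a $\mathbb{C}[[t]]$-bilinear product $\mu'=\mu+\sum_{i\ge1}t^i\varphi_i$ on $V\otimes\mathbb{C}[[t]]$ ($V=\mathbb{C}^n$) which again satisfies the admissible Poisson identity; $\mathcal{P}$ is rigid if every deformation $\mu'$ is isomorphic to $\mu$, i.e. there is $f\in GL(V\otimes\mathbb{C}[[t]])$ with $f^{-1}(\mu(f(X),f(Y)))=\mu'(X,Y)$ for all $X,Y$. A Lie algebra is rigid if every formal deformation of its bracket (as a Lie bracket) is isomorphic to it in the same sense. *)

theory Defs
  imports Complex_Main "HOL-Computational_Algebra.Formal_Power_Series"
begin

text \<open>Vectors of R^n (R a commutative ring) are functions 'n => R with 'n a finite index
  type of cardinality n.  V = C^n is 'n => complex; V \<otimes> C[[t]] = C[[t]]^n is 'n => complex fps.\<close>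

definition vadd :: "('n \<Rightarrow> 'r::comm_ring_1) \<Rightarrow> ('n \<Rightarrow> 'r) \<Rightarrow> ('n \<Rightarrow> 'r)" where
  "vadd x y = (\<lambda>k. x k + y k)"
definition vsub :: "('n \<Rightarrow> 'r::comm_ring_1) \<Rightarrow> ('n \<Rightarrow> 'r) \<Rightarrow> ('n \<Rightarrow> 'r)" where
  "vsub x y = (\<lambda>k. x k - y k)"
definition smul :: "'r::comm_ring_1 \<Rightarrow> ('n \<Rightarrow> 'r) \<Rightarrow> ('n \<Rightarrow> 'r)" where
  "smul c x = (\<lambda>k. c * x k)"
definition vzero :: "'n \<Rightarrow> 'r::comm_ring_1" where
  "vzero = (\<lambda>k. 0)"
definition vsum :: "('i \<Rightarrow> 'n \<Rightarrow> 'r::comm_ring_1) \<Rightarrow> 'i set \<Rightarrow> ('n \<Rightarrow> 'r)" where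
  "vsum f A = (\<lambda>k. \<Sum>i\<in>A. f i k)"
definition ebas :: "'n \<Rightarrow> 'n \<Rightarrow> 'r::comm_ring_1" where
  "ebas i = (\<lambda>k. if k = i then 1 else 0)"

definition blin :: "(('n \<Rightarrow> 'r::comm_ring_1) \<Rightarrow> ('n \<Rightarrow> 'r) \<Rightarrow> ('n \<Rightarrow> 'r)) \<Rightarrow> bool" where
  "blin m \<longleftrightarrow>
     (\<forall>x y z. m (vadd x y) z = vadd (m x z) (m y z)) \<and>
     (\<forall>x y z. m x (vadd y z) = vadd (m x y) (m x z)) \<and>
     (\<forall>c x y. m (smul c x) y = smul c (m x y)) \<and>
     (\<forall>c x y. m x (smul c y) = smul c (m x y))"

definition lin :: "(('n \<Rightarrow> 'r::comm_ring_1) \<Rightarrow> ('n \<Rightarrow> 'r)) \<Rightarrow> bool" where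
  "lin f \<longleftrightarrow> (\<forall>x y. f (vadd x y) = vadd (f x) (f y)) \<and> (\<forall>c x. f (smul c x) = smul c (f x))"

definition assoc :: "(('n \<Rightarrow> 'r::comm_ring_1) \<Rightarrow> ('n \<Rightarrow> 'r) \<Rightarrow> ('n \<Rightarrow> 'r))
     \<Rightarrow> ('n \<Rightarrow> 'r) \<Rightarrow> ('n \<Rightarrow> 'r) \<Rightarrow> ('n \<Rightarrow> 'r) \<Rightarrow> ('n \<Rightarrow> 'r)" where
  "assoc m x y z = vsub (m (m x y) z) (m x (m y z))"

definition adm_poisson :: "(('n \<Rightarrow> 'r::comm_ring_1) \<Rightarrow> ('n \<Rightarrow> 'r) \<Rightarrow> ('n \<Rightarrow> 'r)) \<Rightarrow> bool" where
  "adm_poisson m \<longleftrightarrow> (\<forall>x y z.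
     smul 3 (assoc m x y z) =
     vsub (vsub (vadd (m (m x z) y) (m (m y z) x)) (m (m y x) z)) (m (m z x) y))"

definition is_lie :: "(('n \<Rightarrow> 'r::comm_ring_1) \<Rightarrow> ('n \<Rightarrow> 'r) \<Rightarrow> ('n \<Rightarrow> 'r)) \<Rightarrow> bool" where
  "is_lie b \<longleftrightarrow> blin b \<and> (\<forall>x. b x x = vzero) \<and>
     (\<forall>x y z. vadd (vadd (b x (b y z)) (b y (b z x))) (b z (b x y)) = vzero)"

definition pbr :: "(('n \<Rightarrow> complex) \<Rightarrow> ('n \<Rightarrow> complex) \<Rightarrow> ('n \<Rightarrow> complex))
     \<Rightarrow> ('n \<Rightarrow> complex) \<Rightarrow> ('n \<Rightarrow> complex) \<Rightarrow> ('n \<Rightarrow> complex)" where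
  "pbr m x y = (\<lambda>k. (m x y k - m y x k) / 2)"
definition ppr :: "(('n \<Rightarrow> complex) \<Rightarrow> ('n \<Rightarrow> complex) \<Rightarrow> ('n \<Rightarrow> complex))
     \<Rightarrow> ('n \<Rightarrow> complex) \<Rightarrow> ('n \<Rightarrow> complex) \<Rightarrow> ('n \<Rightarrow> complex)" where
  "ppr m x y = (\<lambda>k. (m x y k + m y x k) / 2)"

inductive_set cspan :: "('n \<Rightarrow> complex) set \<Rightarrow> ('n \<Rightarrow> complex) set" for S where
  cspan_zero: "vzero \<in> cspan S"
| cspan_base: "x \<in> S \<Longrightarrow> x \<in> cspan S"
| cspan_add: "x \<in> cspan S \<Longrightarrow> y \<in> cspan S \<Longrightarrow> vadd x y \<in> cspan S"
| cspan_smul: "x \<in> cspan S \<Longrightarrow> smul c x \<in> cspan S"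

definition csubspace :: "('n \<Rightarrow> complex) set \<Rightarrow> bool" where
  "csubspace S \<longleftrightarrow> vzero \<in> S \<and> (\<forall>x\<in>S. \<forall>y\<in>S. vadd x y \<in> S) \<and> (\<forall>c. \<forall>x\<in>S. smul c x \<in> S)"

type_synonym 'n cbr = "('n \<Rightarrow> complex) \<Rightarrow> ('n \<Rightarrow> complex) \<Rightarrow> ('n \<Rightarrow> complex)"

definition lie_subalg :: "'n cbr \<Rightarrow> ('n \<Rightarrow> complex) set \<Rightarrow> bool" where
  "lie_subalg b S \<longleftrightarrow> csubspace S \<and> (\<forall>x\<in>S. \<forall>y\<in>S. b x y \<in> S)"

definition lie_ideal :: "'n cbr \<Rightarrow> ('n \<Rightarrow> complex) set \<Rightarrow> bool" where
  "lie_ideal b I \<longleftrightarrow> csubspace I \<and> (\<forall>x. \<forall>y\<in>I. b x y \<in> I)"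

fun derived_series :: "'n cbr \<Rightarrow> nat \<Rightarrow> ('n \<Rightarrow> complex) set" where
  "derived_series b 0 = UNIV"
| "derived_series b (Suc k) =
     cspan {b x y | x y. x \<in> derived_series b k \<and> y \<in> derived_series b k}"

definition lie_solvable :: "'n cbr \<Rightarrow> bool" where
  "lie_solvable b \<longleftrightarrow> (\<exists>k. derived_series b k = {vzero})"

fun lower_central :: "'n cbr \<Rightarrow> ('n \<Rightarrow> complex) set \<Rightarrow> nat \<Rightarrow> ('n \<Rightarrow> complex) set" where
  "lower_central b I 0 = I"
| "lower_central b I (Suc k) = cspan {b x y | x y. x \<in> I \<and> y \<in> lower_central b I k}"

definition lie_nilpotent_on :: "'n cbr \<Rightarrow> ('n \<Rightarrow> complex) set \<Rightarrow> bool" where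
  "lie_nilpotent_on b I \<longleftrightarrow> (\<exists>k. lower_central b I k = {vzero})"

definition nilradical :: "'n cbr \<Rightarrow> ('n \<Rightarrow> complex) set \<Rightarrow> bool" where
  "nilradical b N \<longleftrightarrow> lie_ideal b N \<and> lie_nilpotent_on b N \<and>
     (\<forall>I. lie_ideal b I \<and> lie_nilpotent_on b I \<longrightarrow> I \<subseteq> N)"

text \<open>Semisimple (= diagonalizable, over C) endomorphism of C^n: C^n has a basis of eigenvectors.\<close>
definition diagonalizable :: "(('n::finite \<Rightarrow> complex) \<Rightarrow> ('n \<Rightarrow> complex)) \<Rightarrow> bool" where
  "diagonalizable f \<longleftrightarrow> (\<exists>v :: 'n \<Rightarrow> ('n \<Rightarrow> complex).
     (\<forall>i. v i \<noteq> vzero \<and> (\<exists>c. f (v i) = smul c (v i))) \<and>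
     (\<forall>x. \<exists>a. x = vsum (\<lambda>i. smul (a i) (v i)) UNIV))"

definition ext_torus :: "('n::finite) cbr \<Rightarrow> ('n \<Rightarrow> complex) set \<Rightarrow> bool" where
  "ext_torus b T \<longleftrightarrow> lie_subalg b T \<and> (\<forall>x\<in>T. \<forall>y\<in>T. b x y = vzero) \<and>
     (\<forall>x\<in>T. diagonalizable (b x))"

definition max_ext_torus :: "('n::finite) cbr \<Rightarrow> ('n \<Rightarrow> complex) set \<Rightarrow> bool" where
  "max_ext_torus b T \<longleftrightarrow> ext_torus b T \<and> (\<forall>T'. ext_torus b T' \<and> T \<subseteq> T' \<longrightarrow> T' = T)"

definition is_root :: "'n cbr \<Rightarrow> ('n \<Rightarrow> complex) set \<Rightarrow> ('n \<Rightarrow> complex) set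
     \<Rightarrow> (('n \<Rightarrow> complex) \<Rightarrow> complex) \<Rightarrow> bool" where
  "is_root b T N lam \<longleftrightarrow> (\<exists>x\<in>N. x \<noteq> vzero \<and> (\<forall>t\<in>T. b t x = smul (lam t) x))"

definition fconst :: "('n \<Rightarrow> complex) \<Rightarrow> ('n \<Rightarrow> complex fps)" where
  "fconst x = (\<lambda>k. fps_const (x k))"

text \<open>C[[t]]-bilinear extension of a product on C^n to C[[t]]^n.\<close>
definition ext_prod :: "('n::finite) cbr \<Rightarrow> ('n \<Rightarrow> complex fps) \<Rightarrow> ('n \<Rightarrow> complex fps) \<Rightarrow> ('n \<Rightarrow> complex fps)" where
  "ext_prod m X Y = vsum (\<lambda>(i, j). smul (X i * Y j) (fconst (m (ebas i) (ebas j)))) UNIV"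

text \<open>m' is a C[[t]]-bilinear product on C[[t]]^n of the form m + sum_{i>=1} t^i phi_i.\<close>
definition is_deformation :: "('n::finite) cbr
     \<Rightarrow> (('n \<Rightarrow> complex fps) \<Rightarrow> ('n \<Rightarrow> complex fps) \<Rightarrow> ('n \<Rightarrow> complex fps)) \<Rightarrow> bool" where
  "is_deformation m m' \<longleftrightarrow> blin m' \<and>
     (\<forall>x y k. fps_nth (m' (fconst x) (fconst y) k) 0 = m x y k)"

definition def_isomorphic :: "('n::finite) cbr
     \<Rightarrow> (('n \<Rightarrow> complex fps) \<Rightarrow> ('n \<Rightarrow> complex fps) \<Rightarrow> ('n \<Rightarrow> complex fps)) \<Rightarrow> bool" where
  "def_isomorphic m m' \<longleftrightarrow> (\<exists>f. lin f \<and> bij f \<and>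
     (\<forall>X Y. inv f (ext_prod m (f X) (f Y)) = m' X Y))"

definition poisson_rigid :: "('n::finite) cbr \<Rightarrow> bool" where
  "poisson_rigid m \<longleftrightarrow> (\<forall>m'. is_deformation m m' \<and> adm_poisson m' \<longrightarrow> def_isomorphic m m')"

definition lie_rigid :: "('n::finite) cbr \<Rightarrow> bool" where
  "lie_rigid b \<longleftrightarrow> (\<forall>b'. is_deformation b b' \<and> is_lie b' \<longrightarrow> def_isomorphic b b')"

end

theory Submission
  imports Defs "HOL-Library.Function_Algebras"
begin

lemma vadd_eq: "vadd x y = x + y" by (auto simp: vadd_def)
lemma vsub_eq: "vsub x y = x - y" by (auto simp: vsub_def)
lemma vzero_eq: "vzero = 0" by (auto simp: vzero_def)
lemma sum_fun_apply: "sum f A k = (\<Sum>i\<in>A. f i k)"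
  by (induction A rule: infinite_finite_induct) auto

lemma vsum_eq: "vsum f A = sum f A"
  by (auto simp: vsum_def sum_fun_apply)

lemma smul_apply: "smul c x k = c * x k" by (simp add: smul_def)

interpretation M: module "smul :: 'r::comm_ring_1 \<Rightarrow> ('n \<Rightarrow> 'r) \<Rightarrow> _"
  by unfold_locales (auto simp: smul_def algebra_simps)

interpretation V: vector_space "smul :: complex \<Rightarrow> ('n \<Rightarrow> complex) \<Rightarrow> _"
  by unfold_locales (auto simp: smul_def algebra_simps)

lemma smul_neg1: "smul (-1) x = - x" by (simp add: smul_def fun_eq_iff)

lemma ebas_apply: "ebas i k = (if k = i then 1 else 0)" by (simp add: ebas_def)

lemma vec_expand: "x = (\<Sum>i\<in>UNIV. smul (x i) (ebas i :: 'n::finite \<Rightarrow> 'r::comm_ring_1))"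
proof
  fix k show "x k = (\<Sum>i\<in>UNIV. smul (x i) (ebas i :: 'n \<Rightarrow> 'r)) k"
    by (simp add: sum_fun_apply smul_def ebas_def if_distrib cong: if_cong)
qed

interpretation FD: finite_dimensional_vector_space "smul :: complex \<Rightarrow> ('n::finite \<Rightarrow> complex) \<Rightarrow> _" "range ebas"
proof
  show "finite (range (ebas :: 'n \<Rightarrow> 'n \<Rightarrow> complex))" by simp
  show "\<not> M.dependent (range (ebas :: 'n \<Rightarrow> 'n \<Rightarrow> complex))"
    unfolding V.independent_explicit_finite_subsets
  proof (intro allI impI ballI)
    fix S u v assume S: "S \<subseteq> range (ebas :: 'n \<Rightarrow> 'n \<Rightarrow> complex)" "finite S"
      and eq: "(\<Sum>v\<in>S. smul (u v) v) = 0" and v: "v \<in> S"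
    then obtain i where vi: "v = ebas i" by auto
    have "0 = (\<Sum>w\<in>S. smul (u w) w) i" using eq by simp
    also have "\<dots> = (\<Sum>w\<in>S. u w * w i)" by (simp add: sum_fun_apply smul_def)
    also have "\<dots> = (\<Sum>w\<in>{v}. u w * w i)"
    proof (rule sum.mono_neutral_right)
      show "\<forall>w\<in>S - {v}. u w * w i = 0"
      proof
        fix w assume w: "w \<in> S - {v}"
        then obtain j where wj: "w = ebas j" using S by auto
        with w vi have "j \<noteq> i" by auto
        then show "u w * w i = 0" by (simp add: wj ebas_def)
      qed
    qed (use S v in auto)
    also have "\<dots> = u v" by (simp add: vi ebas_def)
    finally show "u v = 0" by simp
  qed
  show "M.span (range (ebas :: 'n \<Rightarrow> 'n \<Rightarrow> complex)) = UNIV"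
  proof -
    have "x \<in> M.span (range ebas)" for x :: "'n \<Rightarrow> complex"
      by (subst vec_expand) (intro M.span_sum M.span_scale M.span_base, auto)
    then show ?thesis by auto
  qed
qed

context
  fixes m :: "('n \<Rightarrow> 'r::comm_ring_1) \<Rightarrow> ('n \<Rightarrow> 'r) \<Rightarrow> ('n \<Rightarrow> 'r)"
  assumes bl: "blin m"
begin

lemma bl_addL: "m (x + y) z = m x z + m y z" using bl by (simp add: blin_def vadd_eq)
lemma bl_addR: "m x (y + z) = m x y + m x z" using bl by (simp add: blin_def vadd_eq)
lemma bl_smulL: "m (smul c x) y = smul c (m x y)" using bl by (simp add: blin_def)
lemma bl_smulR: "m x (smul c y) = smul c (m x y)" using bl by (simp add: blin_def)
lemma bl_zeroL: "m 0 y = 0"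
  using bl_smulL[of 0 0 y] by (simp add: smul_def zero_fun_def)
lemma bl_zeroR: "m x 0 = 0"
  using bl_smulR[of x 0 0] by (simp add: smul_def zero_fun_def)
lemma bl_negL: "m (- x) y = - m x y"
  using bl_smulL[of "-1" x y] by (simp add: smul_neg1)
lemma bl_negR: "m x (- y) = - m x y"
  using bl_smulR[of x "-1" y] by (simp add: smul_neg1)
lemma bl_subL: "m (x - y) z = m x z - m y z"
  using bl_addL[of x "-y" z] bl_negL by simp
lemma bl_subR: "m x (y - z) = m x y - m x z"
  using bl_addR[of x y "-z"] bl_negR by simp
lemma bl_sumL: "m (sum f A) z = (\<Sum>i\<in>A. m (f i) z)"
proof (induction A rule: infinite_finite_induct)
  case (insert x F)
  have "m (sum f (insert x F)) z = m (f x + sum f F) z" using insert(1,2) by (subst sum.insert[OF insert(1,2)]) (rule refl)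
  then show ?case using insert by (simp only: bl_addL sum.insert[OF insert(1,2)])
next
  case (infinite A) then show ?case by (metis bl_zeroL sum.infinite)
next
  case empty show ?case by (metis bl_zeroL sum.empty)
qed
lemma bl_sumR: "m z (sum f A) = (\<Sum>i\<in>A. m z (f i))"
proof (induction A rule: infinite_finite_induct)
  case (insert x F)
  have "m z (sum f (insert x F)) = m z (f x + sum f F)" using insert(1,2) by (subst sum.insert[OF insert(1,2)]) (rule refl)
  then show ?case using insert by (simp only: bl_addR sum.insert[OF insert(1,2)])
next
  case (infinite A) then show ?case by (metis bl_zeroR sum.infinite)
next
  case empty show ?case by (metis bl_zeroR sum.empty)
qed

end

lemmas bl_simps = bl_addL bl_addR bl_smulL bl_smulR bl_zeroL bl_zeroR bl_negL bl_negR bl_subL bl_subR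

definition Ie :: "(('n \<Rightarrow> 'r::comm_ring_1) \<Rightarrow> ('n \<Rightarrow> 'r) \<Rightarrow> ('n \<Rightarrow> 'r)) \<Rightarrow> _" where "Ie m a b c k = 3 * (m (m a b) c k - m a (m b c) k) - m (m a c) b k - m (m b c) a k + m (m b a) c k + m (m c a) b k"


context
  fixes m :: "('n \<Rightarrow> 'r::comm_ring_1) \<Rightarrow> ('n \<Rightarrow> 'r) \<Rightarrow> ('n \<Rightarrow> 'r)"
  assumes bl: "blin m" and ap: "adm_poisson m"
    and three: "\<And>a::'r. 3 * a = 0 \<Longrightarrow> a = 0"
begin

lemma admI: "Ie m x y z k = 0"
proof -
  have "smul 3 (assoc m x y z) k =
     vsub (vsub (vadd (m (m x z) y) (m (m y z) x)) (m (m y x) z)) (m (m z x) y) k"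
    using ap by (simp add: adm_poisson_def)
  then show ?thesis by (simp add: Ie_def smul_def assoc_def vsub_def vadd_def algebra_simps)
qed

lemma three_cancel: "3 * (a - b) = 0 \<Longrightarrow> a = (b::'r)"
  using three[of "a - b"] by (simp add: algebra_simps)

lemma poisson_leib:
  "(m x (m y z + m z y) - m (m y z + m z y) x) =
   (m (m x y - m y x) z + m z (m x y - m y x)) + (m y (m x z - m z x) + m (m x z - m z x) y)"
proof
  fix k
  show "(m x (m y z + m z y) - m (m y z + m z y) x) k =
   ((m (m x y - m y x) z + m z (m x y - m y x)) + (m y (m x z - m z x) + m (m x z - m z x) y)) k"
    apply (simp add: bl_simps[OF bl])
    apply (rule three_cancel)
    apply (rule trans[of _ "- Ie m x y z k - Ie m x z y k + Ie m y x z k - Ie m y z x k + Ie m z x y k - Ie m z y x k"])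
     apply (simp add: Ie_def algebra_simps)
    apply (simp add: admI)
    done
qed

lemma poisson_assoc:
  "m (m x y + m y x) z + m z (m x y + m y x) = m x (m y z + m z y) + m (m y z + m z y) x"
proof
  fix k
  show "(m (m x y + m y x) z + m z (m x y + m y x)) k = (m x (m y z + m z y) + m (m y z + m z y) x) k"
    apply (simp add: bl_simps[OF bl])
    apply (rule three_cancel)
    apply (rule trans[of _ "Ie m x y z k + Ie m x z y k - Ie m z x y k - Ie m z y x k"])
     apply (simp add: Ie_def algebra_simps)
    apply (simp add: admI)
    done
qed

lemma poisson_jac:
  "(m x (m y z - m z y) - m (m y z - m z y) x) + (m y (m z x - m x z) - m (m z x - m x z) y)
   + (m z (m x y - m y x) - m (m x y - m y x) z) = 0"
proof
  fix k
  show "((m x (m y z - m z y) - m (m y z - m z y) x) + (m y (m z x - m x z) - m (m z x - m x z) y)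
   + (m z (m x y - m y x) - m (m x y - m y x) z)) k = 0 k"
    apply (simp add: bl_simps[OF bl])
    apply (rule three_cancel)
    apply (rule trans[of _ "- Ie m x y z k + Ie m x z y k + Ie m y x z k - Ie m y z x k - Ie m z x y k + Ie m z y x k"])
     apply (simp add: Ie_def algebra_simps)
    apply (simp add: admI)
    done
qed

end


lemma csubspace_iff: "csubspace S \<longleftrightarrow> M.subspace S"
  by (simp add: csubspace_def M.subspace_def vzero_eq vadd_eq)

lemma smul_eq_cancel: "smul c a = smul d (a::'n \<Rightarrow> complex) \<Longrightarrow> a \<noteq> 0 \<Longrightarrow> c = d"
proof -
  assume h: "smul c a = smul d a" and a: "a \<noteq> 0"
  then obtain k where "a k \<noteq> 0" by (auto simp: fun_eq_iff)
  moreover have "c * a k = d * a k" using fun_cong[OF h, of k] by (simp add: smul_def)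
  ultimately show "c = d" by simp
qed

definition idx :: "('n \<Rightarrow> complex) \<Rightarrow> 'n" where "idx a = (SOME k. a k \<noteq> 0)"
definition coef :: "('n \<Rightarrow> complex) \<Rightarrow> ('n \<Rightarrow> complex) \<Rightarrow> complex" where
  "coef v a = v (idx a) / a (idx a)"

lemma coef_eig: "v = smul c a \<Longrightarrow> a \<noteq> 0 \<Longrightarrow> coef v a = c"
proof -
  assume v: "v = smul c a" and a: "a \<noteq> 0"
  then have "\<exists>k. a k \<noteq> 0" by (auto simp: fun_eq_iff)
  then have "a (idx a) \<noteq> 0" unfolding idx_def by (rule someI_ex)
  then show ?thesis by (simp add: coef_def v smul_def)
qed

lemma coef_add: "coef (v + w) a = coef v a + coef w a"
  by (simp add: coef_def add_divide_distrib)
lemma coef_smul: "coef (smul c v) a = c * coef v a"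
  by (simp add: coef_def smul_def)
lemma coef_zero: "coef 0 a = 0"
  by (simp add: coef_def)

lemma subspace_image_lin:
  assumes "M.subspace S" and "\<And>x y. f (x + y) = f x + f y" and "\<And>c x. f (smul c x) = smul c (f x)"
  shows "M.subspace (f ` (S :: ('n \<Rightarrow> complex) set))"
proof -
  interpret h: module_hom "smul :: complex \<Rightarrow> ('n \<Rightarrow> complex) \<Rightarrow> _" smul f
    by unfold_locales (use assms in auto)
  show ?thesis using h.subspace_image assms(1) by blast
qed

lemma cspan_single0: "S \<subseteq> {vzero} \<Longrightarrow> cspan S = {vzero}"
proof
  assume S: "S \<subseteq> {vzero}"
  show "cspan S \<subseteq> {vzero}"
  proof
    fix x assume "x \<in> cspan S" then show "x \<in> {vzero}"
      by induction (use S in \<open>auto simp: vzero_def vadd_def smul_def\<close>)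
  qed
qed (auto intro: cspan_zero)

locale P1ctx =
  fixes g s :: "('n::finite \<Rightarrow> complex) \<Rightarrow> ('n \<Rightarrow> complex) \<Rightarrow> ('n \<Rightarrow> complex)"
    and T N :: "('n \<Rightarrow> complex) set"
  assumes gbl: "blin g" and ganti: "\<And>x y. g x y = - g y x"
    and gjac: "\<And>x y z. g x (g y z) = g (g x y) z + g y (g x z)"
    and Tsub: "M.subspace T" and Tab: "\<And>x y. x \<in> T \<Longrightarrow> y \<in> T \<Longrightarrow> g x y = 0"
    and Tdiag: "\<And>x. x \<in> T \<Longrightarrow> diagonalizable (g x)"
    and Nsub: "M.subspace N" and Nid: "\<And>x y. y \<in> N \<Longrightarrow> g x y \<in> N"
    and Nmax: "\<And>I. lie_ideal g I \<Longrightarrow> lie_nilpotent_on g I \<Longrightarrow> I \<subseteq> N"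
    and TN: "T \<inter> N = {0}" and dec: "\<And>x. \<exists>t\<in>T. \<exists>y\<in>N. x = t + y"
    and roots: "\<And>lam. is_root g T N lam \<Longrightarrow> \<exists>t\<in>T. lam t \<noteq> 0"
    and sbl: "blin s" and ssym: "\<And>x y. s x y = s y x"
    and sassoc: "\<And>x y z. s (s x y) z = s x (s y z)"
    and sleib: "\<And>x y z. g x (s y z) = s (g x y) z + s y (g x z)"
begin

lemmas gs = bl_simps[OF gbl]
lemmas ss = bl_simps[OF sbl]

lemma cent: assumes "\<And>t. t \<in> T \<Longrightarrow> g t v = 0" shows "v \<in> T"
proof -
  obtain t0 n where t0: "t0 \<in> T" and n: "n \<in> N" and v: "v = t0 + n" using dec by blast
  have gn: "g t n = 0" if "t \<in> T" for t
    using assms[OF that] Tab[OF that t0] by (simp add: v gs)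
  have "n = 0"
  proof (rule ccontr)
    assume "n \<noteq> 0"
    then have "is_root g T N (\<lambda>_. 0)"
      using n gn by (auto simp: is_root_def vzero_eq smul_def zero_fun_def)
    then show False using roots by auto
  qed
  then show ?thesis using v t0 by simp
qed

lemma sTT: "t \<in> T \<Longrightarrow> t' \<in> T \<Longrightarrow> s t t' \<in> T"
  by (rule cent) (simp add: sleib Tab ss)

definition W where "W = {a. a \<in> N \<and> a \<noteq> 0 \<and> (\<forall>t\<in>T. \<exists>c. g t a = smul c a)}"

definition lam where "lam a t = coef (g t a) a"
definition beta where "beta a t = coef (s t a) a"

lemma lam_eig: "a \<in> W \<Longrightarrow> t \<in> T \<Longrightarrow> g t a = smul (lam a t) a"
proof -
  assume a: "a \<in> W" and t: "t \<in> T"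
  then obtain c where c: "g t a = smul c a" by (auto simp: W_def)
  then have "lam a t = c" using a coef_eig by (auto simp: lam_def W_def)
  then show ?thesis using c by simp
qed

lemma lam_add: "lam a (x + y) = lam a x + lam a y" by (simp add: lam_def gs coef_add)
lemma lam_smul: "lam a (smul c x) = c * lam a x" by (simp add: lam_def gs coef_smul)
lemma beta_add: "beta a (x + y) = beta a x + beta a y" by (simp add: beta_def ss coef_add)
lemma beta_smul: "beta a (smul c x) = c * beta a x" by (simp add: beta_def ss coef_smul)
lemma beta_zero: "beta a 0 = 0" by (simp add: beta_def ss coef_zero)

lemma root_nz: "a \<in> W \<Longrightarrow> \<exists>t\<in>T. lam a t \<noteq> 0"
proof -
  assume a: "a \<in> W"
  have "is_root g T N (lam a)"
    using a lam_eig by (auto simp: is_root_def W_def vzero_eq)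
  then show ?thesis using roots by blast
qed

lemma keyK:
  assumes a: "a \<in> W" and t: "t \<in> T" and t': "t' \<in> T"
  shows "smul (lam a (s t t')) a = smul (lam a t) (s a t') + smul (lam a t') (s t a)"
proof -
  have "g a (s t t') = s (g a t) t' + s t (g a t')" by (rule sleib)
  moreover have "g a (s t t') = - smul (lam a (s t t')) a"
    using ganti lam_eig[OF a sTT[OF t t']] by metis
  moreover have "g a t = - smul (lam a t) a" using ganti lam_eig[OF a t] by metis
  moreover have "g a t' = - smul (lam a t') a" using ganti lam_eig[OF a t'] by metis
  ultimately have "- smul (lam a (s t t')) a = - smul (lam a t) (s a t') - smul (lam a t') (s t a)"
    by (simp add: ss)
  then show ?thesis by (simp add: algebra_simps)
qed

lemma s_eig: assumes a: "a \<in> W" and t: "t \<in> T" shows "s t a = smul (beta a t) a"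
proof -
  obtain t0 where t0: "t0 \<in> T" and nz: "lam a t0 \<noteq> 0" using root_nz[OF a] by blast
  have "smul (lam a (s t0 t0)) a = smul (2 * lam a t0) (s t0 a)"
    using keyK[OF a t0 t0] ssym[of a t0] by (simp add: M.scale_left_distrib[symmetric])
  then have st0: "s t0 a = smul (lam a (s t0 t0) / (2 * lam a t0)) a"
    using nz by (simp add: fun_eq_iff smul_def field_simps)
  have "smul (lam a (s t t0)) a = smul (lam a t) (s a t0) + smul (lam a t0) (s t a)"
    using keyK[OF a t t0] .
  then have "smul (lam a t0) (s t a) = smul (lam a (s t t0) - lam a t * (lam a (s t0 t0) / (2 * lam a t0))) a"
    using st0 ssym[of a t0] by (simp add: fun_eq_iff smul_def algebra_simps)
  then have "s t a = smul ((lam a (s t t0) - lam a t * (lam a (s t0 t0) / (2 * lam a t0))) / lam a t0) a"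
    using nz by (simp add: fun_eq_iff smul_def field_simps)
  then obtain c where c: "s t a = smul c a" by blast
  moreover have "a \<noteq> 0" using a by (simp add: W_def)
  ultimately have "beta a t = c" unfolding beta_def using coef_eig by blast
  then show ?thesis using c by simp
qed

lemma beta_char: assumes a: "a \<in> W" and t: "t \<in> T" and t': "t' \<in> T"
  shows "beta a (s t t') = beta a t * beta a t'"
proof -
  have "smul (beta a (s t t')) a = s (s t t') a" using s_eig[OF a sTT[OF t t']] by simp
  also have "\<dots> = s t (s t' a)" by (rule sassoc)
  also have "\<dots> = smul (beta a t * beta a t') a" by (simp add: s_eig[OF a t'] s_eig[OF a t] ss mult.commute)
  finally show ?thesis using smul_eq_cancel a by (auto simp: W_def)
qed

lemma lam_der: assumes a: "a \<in> W" and t: "t \<in> T" and t': "t' \<in> T"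
  shows "lam a (s t t') = lam a t * beta a t' + lam a t' * beta a t"
proof -
  have "smul (lam a (s t t')) a = smul (lam a t * beta a t' + lam a t' * beta a t) a"
    using keyK[OF a t t'] ssym[of a t'] by (simp add: s_eig[OF a t] s_eig[OF a t'] fun_eq_iff smul_def algebra_simps)
  then show ?thesis using smul_eq_cancel a by (auto simp: W_def)
qed

end


context P1ctx
begin

lemma central_zero: assumes e: "e \<in> T" and c: "\<And>x. g e x = 0" shows "e = 0"
proof -
  define Z where "Z = {z. \<forall>x. g x z = 0}"
  have eZ: "e \<in> Z" unfolding Z_def proof (intro CollectI allI)
    fix x show "g x e = 0" using c[of x] ganti[of x e] by simp
  qed
  have Zsub: "M.subspace Z" unfolding Z_def M.subspace_def by (auto simp: gs)
  have "lie_ideal g Z" unfolding lie_ideal_def csubspace_iff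
    using Zsub by (auto simp: Z_def gs)
  moreover have "lie_nilpotent_on g Z"
  proof -
    have "lower_central g Z (Suc 0) = cspan {g x y | x y. x \<in> Z \<and> y \<in> Z}"
      by (simp only: lower_central.simps)
    also have "\<dots> = {vzero}"
      by (rule cspan_single0) (auto simp: Z_def vzero_eq)
    finally have "lower_central g Z (Suc 0) = {vzero}" .
    then show ?thesis unfolding lie_nilpotent_on_def by blast
  qed
  ultimately have "Z \<subseteq> N" by (rule Nmax)
  then show ?thesis using eZ e TN by auto
qed
lemma lin_kill:
  assumes sp: "\<And>x. x \<in> M.span (T \<union> W)"
    and add: "\<And>x y. f (x + y) = f x + f y" and sc: "\<And>c x. f (smul c x) = smul c (f x)"
    and z: "\<And>x. x \<in> T \<union> W \<Longrightarrow> f x = (0 :: 'n \<Rightarrow> complex)"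
  shows "f y = 0"
proof -
  have "M.subspace {x. f x = 0}"
    unfolding M.subspace_def
  proof (intro conjI ballI allI; simp?)
    show "f 0 = 0" using sc[of 0 0] by (simp add: smul_def zero_fun_def)
    show "\<And>x y. f x = 0 \<Longrightarrow> f y = 0 \<Longrightarrow> f (x + y) = 0" using add by simp
    show "\<And>c x. f x = 0 \<Longrightarrow> f (smul c x) = 0" using sc by (simp add: smul_def zero_fun_def)
  qed
  then have "M.span (T \<union> W) \<subseteq> {x. f x = 0}" using z by (intro M.span_minimal) auto
  then show ?thesis using sp by auto
qed

lemma eig_indep:
  assumes "finite C" and "\<And>c. c \<in> C \<Longrightarrow> g t (y c) = smul c (y c)" and "sum y C = 0"
  shows "\<And>c. c \<in> C \<Longrightarrow> y c = 0"
  using assms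
proof (induction C arbitrary: y rule: finite_induct)
  case empty then show ?case by simp
next
  case (insert c0 C)
  define y' where "y' c = smul (c - c0) (y c)" for c
  have eig': "g t (y' c) = smul c (y' c)" if "c \<in> C" for c
    using insert.prems(2)[of c] that by (simp add: y'_def gs mult.commute)
  have s0: "y c0 + sum y C = 0" using insert.prems(3) by (simp only: sum.insert[OF insert.hyps(1,2)])
  have "g t (y c0 + sum y C) - smul c0 (y c0 + sum y C) = 0" using s0 by (simp add: gs)
  moreover have "g t (y c0 + sum y C) - smul c0 (y c0 + sum y C) = sum y' C"
  proof -
    have "g t (y c0 + sum y C) - smul c0 (y c0 + sum y C)
        = (g t (y c0) - smul c0 (y c0)) + (\<Sum>c\<in>C. g t (y c) - smul c0 (y c))"
      by (simp add: gs bl_sumR[OF gbl] M.scale_sum_right sum_subtractf M.scale_right_distrib)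
    also have "\<dots> = sum y' C"
      using insert.prems(2) by (auto simp: y'_def M.scale_left_diff_distrib intro!: sum.cong)
    finally show ?thesis .
  qed
  ultimately have sy': "sum y' C = 0" by simp
  have y'0: "y' c = 0" if "c \<in> C" for c
    by (rule insert.IH[where y=y']) (use eig' sy' that insert.hyps(1) in auto)
  have yC: "\<And>c. c \<in> C \<Longrightarrow> y c = 0"
  proof -
    fix c assume c: "c \<in> C"
    then have "c \<noteq> c0" using insert.hyps(2) by auto
    then show "y c = 0" using y'0[OF c] by (simp add: y'_def)
  qed
  then have "sum y C = 0" by simp
  then have "y c0 = 0" using s0 by simp
  then show ?case using yC insert.prems(1) by auto
qed

lemma diag_dec:
  assumes t: "t \<in> T"
  shows "\<exists>C y. finite C \<and> (\<forall>c\<in>C. g t (y c) = smul c (y c)) \<and> x = sum y C"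
proof -
  obtain v :: "'n \<Rightarrow> 'n \<Rightarrow> complex" where
    ev: "\<And>i. v i \<noteq> vzero \<and> (\<exists>c. g t (v i) = smul c (v i))" and
    sp: "\<And>x. \<exists>a. x = vsum (\<lambda>i. smul (a i) (v i)) UNIV"
    using Tdiag[OF t] unfolding diagonalizable_def by blast
  obtain e where e: "\<And>i. g t (v i) = smul (e i) (v i)" using ev by metis
  obtain a where a: "x = (\<Sum>i\<in>UNIV. smul (a i) (v i))" using sp[of x] by (auto simp: vsum_eq)
  define y where "y c = (\<Sum>i\<in>{i. e i = c}. smul (a i) (v i))" for c
  have "x = (\<Sum>c\<in>e ` UNIV. y c)"
    unfolding a y_def by (subst sum.image_gen[where g=e, OF finite_UNIV]) simp
  moreover have "g t (y c) = smul c (y c)" for c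
    by (simp add: y_def bl_sumR[OF gbl] M.scale_sum_right gs e mult.commute)
  ultimately show ?thesis by (intro exI[of _ "e ` UNIV"] exI[of _ y]) auto
qed

definition JE where "JE F = {x. \<forall>t\<in>F. \<exists>c. g t x = smul c x}"

lemma gcomm: "t \<in> T \<Longrightarrow> t' \<in> T \<Longrightarrow> g t (g t' x) = g t' (g t x)"
  using gjac[of t t' x] Tab by (simp add: gs)

lemma refine:
  assumes t: "t \<in> T" and F: "F \<subseteq> T" and x: "x \<in> JE F"
  shows "x \<in> M.span (JE (insert t F))"
proof -
  obtain C y where C: "finite C" and ey: "\<And>c. c \<in> C \<Longrightarrow> g t (y c) = smul c (y c)" and xs: "x = sum y C"
    using diag_dec[OF t, of x] by blast
  have "y c \<in> JE (insert t F)" if c: "c \<in> C" for c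
    unfolding JE_def
  proof (intro CollectI ballI)
    fix t' assume t': "t' \<in> insert t F"
    show "\<exists>d. g t' (y c) = smul d (y c)"
    proof (cases "t' = t")
      case True then show ?thesis using ey[OF c] by blast
    next
      case False
      then have t'F: "t' \<in> F" using t' by auto
      then obtain mu where mu: "g t' x = smul mu x" using x by (auto simp: JE_def)
      define z where "z c = g t' (y c) - smul mu (y c)" for c
      have ez: "g t (z c) = smul c (z c)" if "c \<in> C" for c
        using ey[OF that] gcomm[OF t, of t'] t'F F
        by (auto simp: z_def gs M.scale_right_diff_distrib mult.commute)
      have "sum z C = g t' x - smul mu x"
        by (simp add: z_def xs sum_subtractf bl_sumR[OF gbl] M.scale_sum_right)
      then have "sum z C = 0" using mu by simp
      then have "z c = 0" using eig_indep[OF C ez] c by blast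
      then show ?thesis unfolding z_def by auto
    qed
  qed
  then show ?thesis unfolding xs by (intro M.span_sum) (auto intro: M.span_base)
qed

lemma span_JE: "finite F \<Longrightarrow> F \<subseteq> T \<Longrightarrow> x \<in> M.span (JE F)"
proof (induction F arbitrary: x rule: finite_induct)
  case empty then show ?case by (auto simp: JE_def intro: M.span_base)
next
  case (insert t F)
  have "JE F \<subseteq> M.span (JE (insert t F))" using refine insert by blast
  then have "M.span (JE F) \<subseteq> M.span (JE (insert t F))"
    by (intro M.span_minimal) auto
  then show ?case using insert by blast
qed

lemma spanTW: "x \<in> M.span (T \<union> W)"
proof -
  obtain B where B: "B \<subseteq> T" "\<not> M.dependent B" "T \<subseteq> M.span B"
    using V.basis_exists[of T] by metis
  have fB: "finite B" using FD.finiteI_independent[OF B(2)] .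
  have "JE B \<subseteq> JE T"
  proof
    fix x assume x: "x \<in> JE B"
    have "M.subspace {t. \<exists>c. g t x = smul c x}"
      unfolding M.subspace_def
    proof (intro conjI ballI allI; clarsimp)
      show "\<exists>c. g 0 x = smul c x" by (intro exI[of _ 0]) (simp add: gs)
      show "\<exists>c. g (t1 + t2) x = smul c x" if "g t1 x = smul c1 x" "g t2 x = smul c2 x" for t1 t2 c1 c2
        using that by (intro exI[of _ "c1 + c2"]) (simp add: gs M.scale_left_distrib)
      show "\<exists>d. g (smul c t1) x = smul d x" if "g t1 x = smul c1 x" for c t1 c1
        using that by (intro exI[of _ "c * c1"]) (simp add: gs)
    qed
    then have "M.span B \<subseteq> {t. \<exists>c. g t x = smul c x}"
      using x by (intro M.span_minimal) (auto simp: JE_def)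
    then show "x \<in> JE T" using B(3) by (auto simp: JE_def)
  qed
  moreover have "JE T \<subseteq> M.span (T \<union> W)"
  proof
    fix x assume x: "x \<in> JE T"
    show "x \<in> M.span (T \<union> W)"
    proof (cases "x = 0")
      case True then show ?thesis by (simp add: M.span_zero)
    next
      case nz: False
      have eigx: "g t x = smul (coef (g t x) x) x" if "t \<in> T" for t
        using x that coef_eig nz by (auto simp: JE_def) 
      show ?thesis
      proof (cases "\<forall>t\<in>T. coef (g t x) x = 0")
        case True
        then have "x \<in> T" using eigx by (intro cent) (simp add: smul_def zero_fun_def)
        then show ?thesis by (auto intro: M.span_base)
      next
        case False
        then obtain h where h: "h \<in> T" and lnz: "coef (g h x) x \<noteq> 0" by blast
        define l where "l = coef (g h x) x"
        obtain t1 n where t1: "t1 \<in> T" and n: "n \<in> N" and xd: "x = t1 + n" using dec by blast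
        have ghx: "g h x = g h n" using Tab[OF h t1] by (simp add: xd gs)
        have e1: "g h x = smul l x" using eigx[OF h] l_def by simp
        have "g h n = smul l t1 + smul l n" using ghx e1 xd by (simp add: M.scale_right_distrib)
        then have "smul l t1 = g h n - smul l n" by (simp add: eq_diff_eq)
        moreover have "g h n - smul l n \<in> N" using Nid[OF n] n Nsub by (simp add: M.subspace_diff M.subspace_scale)
        moreover have "smul l t1 \<in> T" using t1 Tsub by (simp add: M.subspace_scale)
        ultimately have "smul l t1 \<in> T \<inter> N" by simp
        then have "smul l t1 = 0" using TN by blast
        then have "t1 = 0" using lnz by (simp add: l_def)
        then have "x \<in> W" using xd n nz x by (auto simp: W_def JE_def)
        then show ?thesis by (auto intro: M.span_base)
      qed
    qed
  qed
  ultimately have "JE B \<subseteq> M.span (T \<union> W)" by auto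
  then have "M.span (JE B) \<subseteq> M.span (T \<union> W)" by (intro M.span_minimal) auto
  then show ?thesis using span_JE[OF fB B(1)] by auto
qed

lemma lam_sep: assumes e: "e \<in> T" and l: "\<And>a. a \<in> W \<Longrightarrow> lam a e = 0" shows "e = 0"
proof (rule central_zero[OF e])
  fix x show "g e x = 0"
  proof (rule lin_kill[OF spanTW, of "g e"])
    fix x assume "x \<in> T \<union> W"
    then show "g e x = 0" using Tab[OF e] lam_eig[OF _ e] l by (auto simp: smul_def zero_fun_def)
  qed (simp_all add: gs)
qed

end


lemma surj_inj_sub:
  fixes A :: "('n::finite \<Rightarrow> complex) set"
  assumes A: "M.subspace A" and LA: "L ` A = A"
    and add: "\<And>x y. L (x + y) = L x + L y" and sc: "\<And>c x. L (smul c x) = smul c (L x)"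
    and x: "x \<in> A" and Lx: "L x = 0"
  shows "x = 0"
proof (rule ccontr)
  assume nz: "x \<noteq> 0"
  interpret h: module_hom "smul :: complex \<Rightarrow> ('n \<Rightarrow> complex) \<Rightarrow> _" smul L
    by unfold_locales (use add sc in auto)
  have "\<not> M.dependent {x}" using nz by (simp add: V.dependent_single)
  then obtain B where B: "{x} \<subseteq> B" "B \<subseteq> A" "\<not> M.dependent B" "A \<subseteq> M.span B"
    using V.maximal_independent_subset_extend[of "{x}" A] x by auto
  have fB: "finite B" using FD.finiteI_independent[OF B(3)] .
  have cB: "card B = V.dim A" using V.basis_card_eq_dim[OF B(2) B(4) B(3)] .
  have "A = L ` A" using LA by simp
  also have "\<dots> \<subseteq> L ` M.span B" using B(4) by auto
  also have "\<dots> = M.span (L ` B)" using h.span_image by simp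
  also have "L ` B = insert 0 (L ` (B - {x}))" using B(1) Lx by auto
  also have "M.span (insert 0 (L ` (B - {x}))) = M.span (L ` (B - {x}))" by simp
  finally have "A \<subseteq> M.span (L ` (B - {x}))" .
  then have "V.dim A \<le> card (L ` (B - {x}))" using fB by (intro V.dim_le_card) auto
  also have "\<dots> \<le> card (B - {x})" using fB by (intro card_image_le) auto
  also have "\<dots> < card B" using fB B(1) by (intro psubset_card_mono) auto
  finally show False using cB by simp
qed

context P1ctx
begin

lemma no_beta: assumes a: "a \<in> W" and u: "u \<in> T" shows "beta a u = 0"
proof (rule ccontr)
  assume nz: "beta a u \<noteq> 0"
  define L where "L = s u"
  have Ladd: "L (x + y) = L x + L y" for x y by (simp add: L_def ss)
  have Lsc: "L (smul c x) = smul c (L x)" for c x by (simp add: L_def ss)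
  define A where "A k = (L ^^ k) ` T" for k
  have A0: "A 0 = T" by (simp add: A_def)
  have A_Suc: "A (Suc k) = L ` A k" for k by (simp add: A_def image_comp)
  have Asub: "M.subspace (A k)" for k
  proof (induction k)
    case 0 then show ?case using Tsub by (simp add: A0)
  next
    case (Suc k) then show ?case unfolding A_Suc by (rule subspace_image_lin) (simp_all add: Ladd Lsc)
  qed
  have AT: "A k \<subseteq> T" for k
  proof (induction k)
    case 0 then show ?case by (simp add: A0)
  next
    case (Suc k) then show ?case unfolding A_Suc L_def using sTT[OF u] by auto
  qed
  have Amono: "A (Suc k) \<subseteq> A k" for k
  proof (induction k)
    case 0 then show ?case using AT[of 1] by (simp add: A0)
  next
    case (Suc k) then show ?case unfolding A_Suc[of "Suc k"] A_Suc[of k] by auto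
  qed
  have "\<exists>m. V.dim (A (Suc m)) = V.dim (A m)"
  proof (rule ccontr)
    assume "\<not> ?thesis"
    then have lt: "V.dim (A (Suc k)) < V.dim (A k)" for k
      using FD.dim_subset[OF Amono[of k]] by (simp add: order_less_le)
    have "V.dim (A k) + k \<le> V.dim (A 0)" for k
    proof (induction k)
      case (Suc k) then show ?case using lt[of k] by simp
    qed simp
    from this[of "Suc (V.dim (A 0))"] show False by simp
  qed
  then obtain m where dm: "V.dim (A (Suc m)) = V.dim (A m)" by blast
  define A' where "A' = A m"
  have A'eq: "A (Suc m) = A m"
    by (rule FD.subspace_dim_equal[OF Asub Asub Amono]) (simp add: dm)
  have LA: "L ` A' = A'" using A'eq by (simp add: A'_def A_Suc)
  have A'sub: "M.subspace A'" using Asub by (simp add: A'_def)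
  have Linj: "x \<in> A' \<Longrightarrow> L x = 0 \<Longrightarrow> x = 0" for x
    by (rule surj_inj_sub[OF A'sub LA Ladd Lsc])
  have surjA: "(L ^^ j) ` A' = A'" for j
  proof (induction j)
    case (Suc j)
    have "(L ^^ Suc j) ` A' = L ` ((L ^^ j) ` A')" by (simp add: image_comp)
    then show ?case using Suc LA by simp
  qed simp
  have injA: "x \<in> A' \<Longrightarrow> (L ^^ j) x = 0 \<Longrightarrow> x = 0" for j x
  proof (induction j)
    case (Suc j)
    have "(L ^^ j) x \<in> A'" using surjA[of j] Suc.prems(1) by blast
    moreover have "L ((L ^^ j) x) = 0" using Suc.prems(2) by (metis comp_apply funpow.simps(2))
    ultimately have "(L ^^ j) x = 0" using Linj by blast
    then show ?case using Suc.IH Suc.prems(1) by blast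
  qed simp
  define pw where "pw k = (L ^^ k) u" for k
  have pwA: "pw k \<in> A k" for k using u by (simp add: pw_def A_def)
  have pwT: "pw k \<in> T" for k using pwA AT by blast
  have pw_Suc: "pw (Suc k) = s u (pw k)" for k by (simp add: pw_def L_def)
  have bpw: "beta a (pw k) = beta a u ^ Suc k" for k
  proof (induction k)
    case 0 then show ?case by (simp add: pw_def)
  next
    case (Suc k) then show ?case using beta_char[OF a u pwT[of k]] by (simp add: pw_Suc)
  qed
  have sw: "s (pw k) v = (L ^^ Suc k) v" for k v
  proof (induction k arbitrary: v)
    case 0 then show ?case by (simp add: pw_def L_def)
  next
    case (Suc k) then show ?case by (simp add: pw_Suc sassoc L_def)
  qed
  define w where "w = pw m"
  have wA: "w \<in> A'" using pwA by (simp add: w_def A'_def)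
  have wnz: "w \<noteq> 0"
  proof
    assume "w = 0"
    then have "beta a u ^ Suc m = 0" using bpw[of m] beta_zero by (simp add: w_def)
    then show False using nz by simp
  qed
  obtain e where eA: "e \<in> A'" and we: "(L ^^ Suc m) e = w"
    using wA surjA[of "Suc m"] by (metis imageE)
  have we': "s w e = w" using we sw by (simp add: w_def)
  have ideal: "x \<in> T \<Longrightarrow> y \<in> A k \<Longrightarrow> s x y \<in> A k" for x y k
  proof (induction k arbitrary: y)
    case 0 then show ?case using sTT by (simp add: A0)
  next
    case (Suc k)
    then obtain y' where y': "y' \<in> A k" and yy: "y = L y'" by (auto simp: A_Suc)
    have "s x y = s u (s x y')"
      by (simp add: yy L_def sassoc[symmetric] ssym[of x u])
    then show ?case using Suc.IH[OF Suc.prems(1) y'] by (simp add: A_Suc L_def)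
  qed
  have eT: "e \<in> T" using eA AT by (auto simp: A'_def)
  have eeA: "s e e \<in> A'" using ideal[OF eT] eA by (simp add: A'_def)
  have swee: "s w (s e e) = w" using we' by (simp add: sassoc[symmetric])
  have "(L ^^ Suc m) (s e e - e) = s w (s e e - e)" unfolding w_def by (rule sw[symmetric])
  also have "\<dots> = s w (s e e) - s w e" by (simp add: ss)
  also have "\<dots> = 0" using swee we' by simp
  finally have "(L ^^ Suc m) (s e e - e) = 0" .
  moreover have "s e e - e \<in> A'" using eeA eA A'sub by (simp add: M.subspace_diff)
  ultimately have ee: "s e e = e" using injA by fastforce
  have enz: "e \<noteq> 0"
  proof
    assume "e = 0" then have "s w e = 0" by (simp add: ss)
    then show False using we' wnz by simp
  qed
  have "lam b e = 0" if b: "b \<in> W" for b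
  proof -
    have bb: "beta b e = beta b e * beta b e" using beta_char[OF b eT eT] ee by simp
    have ll: "lam b e = 2 * lam b e * beta b e" using lam_der[OF b eT eT] ee by simp
    show ?thesis
    proof (cases "beta b e = 0")
      case True then show ?thesis using ll by simp
    next
      case False then have "beta b e = 1" using bb by simp
      then show ?thesis using ll by simp
    qed
  qed
  then have "e = 0" by (rule lam_sep[OF eT])
  then show False using enz by simp
qed

theorem P1_main: "s x y = 0"
proof -
  have sTT0: "s t t' = 0" if t: "t \<in> T" and t': "t' \<in> T" for t t'
    by (rule lam_sep[OF sTT[OF t t']]) (simp add: lam_der t t' no_beta)
  have sTW0: "s t a = 0" if t: "t \<in> T" and a: "a \<in> W" for t a
    using s_eig[OF a t] no_beta[OF a t] by simp
  have sT: "s t z = 0" if t: "t \<in> T" for t z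
    by (rule lin_kill[OF spanTW, of "s t"]) (use sTT0 sTW0 t in \<open>auto simp: ss\<close>)
  have sW: "s a z = 0" if a: "a \<in> W" for a z
  proof -
    obtain t0 where t0: "t0 \<in> T" and nz: "lam a t0 \<noteq> 0" using root_nz[OF a] by blast
    have "g a (s t0 z) = s (g a t0) z + s t0 (g a z)" by (rule sleib)
    then have "s (g a t0) z = 0" using sT[OF t0] by (simp add: gs)
    moreover have "g a t0 = - smul (lam a t0) a" using ganti lam_eig[OF a t0] by metis
    ultimately have "smul (lam a t0) (s a z) = 0" by (simp add: ss)
    then show ?thesis using nz by simp
  qed
  show ?thesis
    by (rule lin_kill[OF spanTW, of "\<lambda>x. s x y"]) (use sT sW in \<open>auto simp: ss\<close>)
qed

end


definition Bm :: "(('n \<Rightarrow> 'r::comm_ring_1) \<Rightarrow> ('n \<Rightarrow> 'r) \<Rightarrow> ('n \<Rightarrow> 'r)) \<Rightarrow> _" where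
  "Bm m x y = m x y - m y x"
definition Sm :: "(('n \<Rightarrow> 'r::comm_ring_1) \<Rightarrow> ('n \<Rightarrow> 'r) \<Rightarrow> ('n \<Rightarrow> 'r)) \<Rightarrow> _" where
  "Sm m x y = m x y + m y x"

lemma blin_intro:
  assumes "\<And>x y z. m (x + y) z = m x z + m y z" "\<And>x y z. m x (y + z) = m x y + m x z"
    "\<And>c x y. m (smul c x) y = smul c (m x y)" "\<And>c x y. m x (smul c y) = smul c (m x y)"
  shows "blin m"
  using assms by (simp add: blin_def vadd_eq)

lemma blin_Bm: "blin m \<Longrightarrow> blin (Bm m)"
  by (rule blin_intro) (simp_all add: Bm_def bl_simps[of m] M.scale_right_diff_distrib)
lemma blin_Sm: "blin m \<Longrightarrow> blin (Sm m)"
  by (rule blin_intro) (simp_all add: Sm_def bl_simps[of m] M.scale_right_distrib)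

lemma blin_half: "blin m \<Longrightarrow> blin (\<lambda>x y. smul (c::'r::comm_ring_1) (m x y))"
  by (rule blin_intro) (simp_all add: bl_simps[of m] M.scale_right_distrib mult.commute)

lemma Bm_leib: fixes m :: "('n \<Rightarrow> 'r::comm_ring_1) \<Rightarrow> ('n \<Rightarrow> 'r) \<Rightarrow> ('n \<Rightarrow> 'r)" shows "blin m \<Longrightarrow> adm_poisson m \<Longrightarrow> (\<And>a::'r. 3 * a = 0 \<Longrightarrow> a = 0) \<Longrightarrow>
  Bm m x (Sm m y z) = Sm m (Bm m x y) z + Sm m y (Bm m x z)"
  using poisson_leib[of m x y z] by (simp add: Bm_def Sm_def)
lemma Sm_assoc: fixes m :: "('n \<Rightarrow> 'r::comm_ring_1) \<Rightarrow> ('n \<Rightarrow> 'r) \<Rightarrow> ('n \<Rightarrow> 'r)" shows "blin m \<Longrightarrow> adm_poisson m \<Longrightarrow> (\<And>a::'r. 3 * a = 0 \<Longrightarrow> a = 0) \<Longrightarrow>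
  Sm m (Sm m x y) z = Sm m x (Sm m y z)"
  using poisson_assoc[of m x y z] by (simp add: Sm_def)
lemma Bm_jac: fixes m :: "('n \<Rightarrow> 'r::comm_ring_1) \<Rightarrow> ('n \<Rightarrow> 'r) \<Rightarrow> ('n \<Rightarrow> 'r)" shows "blin m \<Longrightarrow> adm_poisson m \<Longrightarrow> (\<And>a::'r. 3 * a = 0 \<Longrightarrow> a = 0) \<Longrightarrow>
  Bm m x (Bm m y z) + Bm m y (Bm m z x) + Bm m z (Bm m x y) = 0"
  using poisson_jac[of m x y z] by (simp add: Bm_def)

lemma pbr_eq: "pbr m x y = smul (1/2) (Bm m x y)"
  by (simp add: pbr_def Bm_def smul_def fun_eq_iff)
lemma ppr_eq: "ppr m x y = smul (1/2) (Sm m x y)"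
  by (simp add: ppr_def Sm_def smul_def fun_eq_iff)

lemma three_complex: "3 * (a::complex) = 0 \<Longrightarrow> a = 0" by simp

lemma P1_apply:
  fixes mu :: "('n::finite \<Rightarrow> complex) \<Rightarrow> ('n \<Rightarrow> complex) \<Rightarrow> ('n \<Rightarrow> complex)"
    and T N :: "('n \<Rightarrow> complex) set" and s :: "('n \<Rightarrow> complex) \<Rightarrow> ('n \<Rightarrow> complex) \<Rightarrow> ('n \<Rightarrow> complex)"
  assumes bmu: "blin mu" and apmu: "adm_poisson mu"
    and mt: "max_ext_torus (pbr mu) T" and nr: "nilradical (pbr mu) N"
    and TN: "T \<inter> N = {vzero}" and dec: "\<forall>x. \<exists>t\<in>T. \<exists>y\<in>N. x = vadd t y"
    and rt: "\<forall>lam. is_root (pbr mu) T N lam \<longrightarrow> (\<exists>t\<in>T. lam t \<noteq> 0)"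
    and sbl: "blin s" and ssym: "\<And>x y. s x y = s y x"
    and sassoc: "\<And>x y z. s (s x y) z = s x (s y z)"
    and sleib: "\<And>x y z. Bm mu x (s y z) = s (Bm mu x y) z + s y (Bm mu x z)"
  shows "s x y = 0"
proof -
  have bB: "blin (Bm mu)" using blin_Bm[OF bmu] .
  have pe: "pbr mu = (\<lambda>x y. smul (1/2) (Bm mu x y))" by (simp add: pbr_eq fun_eq_iff)
  interpret P1ctx "pbr mu" s T N
  proof
    show "blin (pbr mu)" unfolding pe by (rule blin_half[OF bB])
    show "pbr mu x y = - pbr mu y x" for x y
    proof
      fix k show "pbr mu x y k = (- pbr mu y x) k"
        by (simp add: pbr_def) (simp add: field_simps)
    qed
    show "pbr mu x (pbr mu y z) = pbr mu (pbr mu x y) z + pbr mu y (pbr mu x z)" for x y z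
    proof -
      have J: "Bm mu x (Bm mu y z) + Bm mu y (Bm mu z x) + Bm mu z (Bm mu x y) = 0"
        by (rule Bm_jac[OF bmu apmu three_complex])
      have a1: "Bm mu a b = - Bm mu b a" for a b by (simp add: Bm_def)
      have "Bm mu x (Bm mu y z) = Bm mu (Bm mu x y) z + Bm mu y (Bm mu x z)"
        using J a1[of z "Bm mu x y"] a1[of z x] bl_negR[OF bB, of y "Bm mu x z"]
        by (simp add: algebra_simps eq_neg_iff_add_eq_0)
      then show ?thesis by (simp add: pe bl_simps[OF bB] M.scale_right_distrib[symmetric])
    qed
    show "M.subspace T" using mt by (simp add: max_ext_torus_def ext_torus_def lie_subalg_def csubspace_iff)
    show "x \<in> T \<Longrightarrow> y \<in> T \<Longrightarrow> pbr mu x y = 0" for x y using mt by (simp add: max_ext_torus_def ext_torus_def vzero_eq)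
    show "x \<in> T \<Longrightarrow> diagonalizable (pbr mu x)" for x using mt by (simp add: max_ext_torus_def ext_torus_def)
    show "M.subspace N" using nr by (simp add: nilradical_def lie_ideal_def csubspace_iff)
    show "y \<in> N \<Longrightarrow> pbr mu x y \<in> N" for x y using nr by (simp add: nilradical_def lie_ideal_def)
    show "lie_ideal (pbr mu) I \<Longrightarrow> lie_nilpotent_on (pbr mu) I \<Longrightarrow> I \<subseteq> N" for I using nr by (simp add: nilradical_def)
    show "T \<inter> N = {0}" using TN by (simp add: vzero_eq)
    show "\<exists>t\<in>T. \<exists>y\<in>N. x = t + y" for x using dec by (simp add: vadd_eq)
    show "is_root (pbr mu) T N lam \<Longrightarrow> \<exists>t\<in>T. lam t \<noteq> 0" for lam using rt by simp
    show "blin s" by fact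
    show "s x y = s y x" for x y by (rule ssym)
    show "s (s x y) z = s x (s y z)" for x y z by (rule sassoc)
    show "pbr mu x (s y z) = s (pbr mu x y) z + s y (pbr mu x z)" for x y z
      using sleib[of x y z] by (simp add: pe bl_simps[OF sbl] M.scale_right_distrib[symmetric])
  qed
  show ?thesis by (rule P1_main)
qed


lemma fps_num_cancel: "numeral n * (a::complex fps) = 0 \<Longrightarrow> a = 0"
  by (simp add: fps_numeral_fps_const)

lemma fconst_add: "fconst (x + y) = fconst x + fconst y"
  by (simp add: fconst_def fun_eq_iff)
lemma fconst_smul: "fconst (smul c x) = smul (fps_const c) (fconst x)"
  by (simp add: fconst_def fun_eq_iff smul_def)
lemma fconst_ebas: "fconst (ebas i) = ebas i"
  by (simp add: fconst_def fun_eq_iff ebas_def)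

lemma sum_single_nz:
  assumes "finite A" "p \<in> A" "\<And>j. j \<in> A \<Longrightarrow> j \<noteq> p \<Longrightarrow> f j = (0::'a::comm_monoid_add)"
  shows "sum f A = f p"
proof -
  have "sum f A = sum f {p}"
    by (rule sum.mono_neutral_right) (use assms in auto)
  then show ?thesis by simp
qed

lemma expandR:
  fixes M :: "('n::finite \<Rightarrow> complex fps) \<Rightarrow> ('n \<Rightarrow> complex fps) \<Rightarrow> ('n \<Rightarrow> complex fps)"
  assumes bM: "blin M"
    and vq: "\<And>l i j. j < q \<Longrightarrow> fps_nth (M A (ebas l) i) j = 0"
    and vp: "\<And>l j. j < p \<Longrightarrow> fps_nth (W l) j = 0"
  shows "fps_nth (M A W i) (p + q) = (\<Sum>l\<in>UNIV. fps_nth (W l) p * fps_nth (M A (ebas l) i) q)"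
proof -
  have "M A W = M A (\<Sum>l\<in>UNIV. smul (W l) (ebas l))" by (subst vec_expand[of W]) (rule refl)
  also have "\<dots> = (\<Sum>l\<in>UNIV. smul (W l) (M A (ebas l)))" by (simp add: bl_sumR[OF bM] bl_smulR[OF bM])
  finally have "fps_nth (M A W i) (p + q) = (\<Sum>l\<in>UNIV. fps_nth ((W l * M A (ebas l) i)) (p + q))"
    by (simp add: sum_fun_apply smul_def fps_sum_nth)
  also have "\<dots> = (\<Sum>l\<in>UNIV. fps_nth (W l) p * fps_nth (M A (ebas l) i) q)"
  proof (rule sum.cong[OF refl])
    fix l
    have "fps_nth ((W l * M A (ebas l) i)) (p + q) = (\<Sum>j=0..p+q. fps_nth (W l) j * fps_nth (M A (ebas l) i) (p + q - j))"
      by (rule fps_mult_nth)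
    also have "\<dots> = fps_nth (W l) p * fps_nth (M A (ebas l) i) (p + q - p)"
    proof (rule sum_single_nz)
      fix j assume j: "j \<in> {0..p+q}" "j \<noteq> p"
      show "fps_nth (W l) j * fps_nth (M A (ebas l) i) (p + q - j) = 0"
      proof (cases "j < p")
        case True then show ?thesis using vp by simp
      next
        case False then have "p + q - j < q" using j by auto
        then show ?thesis using vq by simp
      qed
    qed auto
    finally show "fps_nth ((W l * M A (ebas l) i)) (p + q) = fps_nth (W l) p * fps_nth (M A (ebas l) i) q" by simp
  qed
  finally show ?thesis .
qed

lemma expandL:
  fixes M :: "('n::finite \<Rightarrow> complex fps) \<Rightarrow> ('n \<Rightarrow> complex fps) \<Rightarrow> ('n \<Rightarrow> complex fps)"
  assumes bM: "blin M"
    and vq: "\<And>l i j. j < q \<Longrightarrow> fps_nth (M (ebas l) A i) j = 0"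
    and vp: "\<And>l j. j < p \<Longrightarrow> fps_nth (W l) j = 0"
  shows "fps_nth (M W A i) (p + q) = (\<Sum>l\<in>UNIV. fps_nth (W l) p * fps_nth (M (ebas l) A i) q)"
proof -
  have bM': "blin (\<lambda>x y. M y x)" using bM by (simp add: blin_def)
  show ?thesis using expandR[OF bM', of q A p W i] vq vp by simp
qed

lemma expand_lin:
  fixes f :: "('n::finite \<Rightarrow> complex) \<Rightarrow> ('n \<Rightarrow> complex)"
  assumes "\<And>x y. f (x + y) = f x + f y" "\<And>c x. f (smul c x) = smul c (f x)"
  shows "f v i = (\<Sum>l\<in>UNIV. v l * f (ebas l) i)"
proof -
  have f0: "f 0 = 0" using assms(2)[of 0 0] by (simp add: smul_def zero_fun_def)
  have fs: "f (sum g A) = (\<Sum>l\<in>A. f (g l))" for g and A :: "'n set"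
  proof (induction A rule: infinite_finite_induct)
    case (infinite A) then show ?case by (metis sum.infinite f0)
  next
    case empty then show ?case by (simp only: sum.empty f0)
  next
    case (insert x F) then show ?case by (simp only: sum.insert[OF insert(1,2)] assms(1) insert(3))
  qed
  have "f v = f (\<Sum>l\<in>UNIV. smul (v l) (ebas l))" by (subst vec_expand[of v]) (rule refl)
  also have "\<dots> = (\<Sum>l\<in>UNIV. smul (v l) (f (ebas l)))" by (simp add: fs assms(2))
  finally show ?thesis by (simp add: sum_fun_apply smul_def)
qed


locale hyps =
  fixes mu :: "('n::finite \<Rightarrow> complex) \<Rightarrow> ('n \<Rightarrow> complex) \<Rightarrow> ('n \<Rightarrow> complex)"
    and T N :: "('n \<Rightarrow> complex) set"
  assumes bmu: "blin mu" and apmu: "adm_poisson mu"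
    and mt: "max_ext_torus (pbr mu) T" and nr: "nilradical (pbr mu) N"
    and TN: "T \<inter> N = {vzero}" and dec: "\<forall>x. \<exists>t\<in>T. \<exists>y\<in>N. x = vadd t y"
    and rt: "\<forall>lam. is_root (pbr mu) T N lam \<longrightarrow> (\<exists>t\<in>T. lam t \<noteq> 0)"
begin

lemmas P1a = P1_apply[OF bmu apmu mt nr TN dec rt]

lemma ppr_zero: "ppr mu x y = 0"
proof -
  have bS: "blin (Sm mu)" by (rule blin_Sm[OF bmu])
  have bB: "blin (Bm mu)" by (rule blin_Bm[OF bmu])
  have "smul (1/2) (Sm mu x y) = 0"
  proof (rule P1a[where s="\<lambda>x y. smul (1/2) (Sm mu x y)"])
    show "blin (\<lambda>x y. smul (1/2) (Sm mu x y))" by (rule blin_half[OF bS])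
    show "smul (1/2) (Sm mu a b) = smul (1/2) (Sm mu b a)" for a b by (simp add: Sm_def add.commute)
    show "smul (1/2) (Sm mu (smul (1/2) (Sm mu a b)) c) = smul (1/2) (Sm mu a (smul (1/2) (Sm mu b c)))" for a b c
      by (simp add: bl_simps[OF bS] Sm_assoc[OF bmu apmu three_complex])
    show "Bm mu a (smul (1/2) (Sm mu b c)) = smul (1/2) (Sm mu (Bm mu a b) c) + smul (1/2) (Sm mu b (Bm mu a c))" for a b c
      by (simp add: bl_simps[OF bB] Bm_leib[OF bmu apmu three_complex] M.scale_right_distrib)
  qed
  then show ?thesis by (simp add: ppr_eq)
qed

lemma pbr_mu: "pbr mu = mu"
proof (intro ext)
  fix x y k
  have "ppr mu x y k = 0" using ppr_zero by simp
  then have "mu y x k = - mu x y k" by (simp add: ppr_def add_eq_0_iff)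
  then show "pbr mu x y k = mu x y k" by (simp add: pbr_def)
qed

lemma def_S_zero:
  fixes m' :: "('n \<Rightarrow> complex fps) \<Rightarrow> ('n \<Rightarrow> complex fps) \<Rightarrow> ('n \<Rightarrow> complex fps)"
  assumes dm: "is_deformation mu m'" and am: "adm_poisson m'"
  shows "Sm m' X Y = 0"
proof -
  have bm': "blin m'" using dm by (simp add: is_deformation_def)
  have c0: "fps_nth (m' (fconst x) (fconst y) k) 0 = mu x y k" for x y k
    using dm by (simp add: is_deformation_def)
  have three_fps: "3 * (a::complex fps) = 0 \<Longrightarrow> a = 0" for a by (rule fps_num_cancel)
  define S' where "S' = Sm m'"
  define B' where "B' = Bm m'"
  have bS: "blin S'" unfolding S'_def by (rule blin_Sm[OF bm'])
  have bB: "blin B'" unfolding B'_def by (rule blin_Bm[OF bm'])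
  have leibF: "B' X (S' Y Z) = S' (B' X Y) Z + S' Y (B' X Z)" for X Y Z
    unfolding S'_def B'_def by (rule Bm_leib[OF bm' am three_fps])
  have assocF: "S' (S' X Y) Z = S' X (S' Y Z)" for X Y Z
    unfolding S'_def by (rule Sm_assoc[OF bm' am three_fps])
  have B0: "fps_nth (B' (fconst x) (fconst y) k) 0 = Bm mu x y k" for x y k
    by (simp add: B'_def Bm_def c0)
  have const_zero: "S' (fconst x) (fconst y) = 0" for x y
  proof (rule ccontr)
    assume "S' (fconst x) (fconst y) \<noteq> 0"
    then obtain i0 n0 where nz0: "fps_nth (S' (fconst x) (fconst y) i0) n0 \<noteq> 0"
      by (auto simp: fun_eq_iff fps_eq_iff)
    define P where "P n \<longleftrightarrow> (\<exists>x y i. fps_nth (S' (fconst x) (fconst y) i) n \<noteq> 0)" for n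
    have Pn0: "P n0" using nz0 by (auto simp: P_def)
    define K where "K = (LEAST n. P n)"
    have PK: "P K" unfolding K_def by (rule LeastI[of P, OF Pn0])
    have van: "fps_nth (S' (fconst x) (fconst y) i) j = 0" if "j < K" for x y i j
      using not_less_Least[OF that[unfolded K_def]] by (auto simp: P_def)
    have vanL: "fps_nth (S' (ebas l) (fconst z) i) j = 0" if "j < K" for l z i j
      using van[OF that, of "ebas l" z i] by (simp add: fconst_ebas)
    have vanR: "fps_nth (S' (fconst z) (ebas l) i) j = 0" if "j < K" for l z i j
      using van[OF that, of z "ebas l" i] by (simp add: fconst_ebas)
    define sK where "sK x y = (\<lambda>i. fps_nth (S' (fconst x) (fconst y) i) K)" for x y
    have sKe: "sK (ebas l) z i = fps_nth (S' (ebas l) (fconst z) i) K" for l z i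
      by (simp add: sK_def fconst_ebas)
    have sKe': "sK z (ebas l) i = fps_nth (S' (fconst z) (ebas l) i) K" for l z i
      by (simp add: sK_def fconst_ebas)
    have bsK: "blin sK"
    proof (rule blin_intro)
      show "sK (a + b) c = sK a c + sK b c" for a b c
        by (simp add: sK_def fconst_add bl_addL[OF bS] fun_eq_iff)
      show "sK a (b + c) = sK a b + sK a c" for a b c
        by (simp add: sK_def fconst_add bl_addR[OF bS] fun_eq_iff)
      show "sK (smul c a) b = smul c (sK a b)" for a b c
        unfolding sK_def fconst_smul bl_smulL[OF bS] by (simp add: fun_eq_iff smul_def)
      show "sK a (smul c b) = smul c (sK a b)" for a b c
        unfolding sK_def fconst_smul bl_smulR[OF bS] by (simp add: fun_eq_iff smul_def)
    qed
    have linL: "sK v z i = (\<Sum>l\<in>UNIV. v l * sK (ebas l) z i)" for v z i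
      by (rule expand_lin[of "\<lambda>v. sK v z"]) (simp_all add: bl_addL[OF bsK] bl_smulL[OF bsK])
    have linR: "sK z v i = (\<Sum>l\<in>UNIV. v l * sK z (ebas l) i)" for v z i
      by (rule expand_lin[of "\<lambda>v. sK z v"]) (simp_all add: bl_addR[OF bsK] bl_smulR[OF bsK])
    have bBmu: "blin (Bm mu)" by (rule blin_Bm[OF bmu])
    have linB: "Bm mu x v i = (\<Sum>l\<in>UNIV. v l * Bm mu x (ebas l) i)" for x v i
      by (rule expand_lin[of "\<lambda>v. Bm mu x v"]) (simp_all add: bl_addR[OF bBmu] bl_smulR[OF bBmu])
    have sK0: "sK a b = 0" for a b
    proof (rule P1a[where s=sK])
      show "blin sK" by (rule bsK)
      show "sK a b = sK b a" for a b by (simp add: sK_def S'_def Sm_def add.commute)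
      show "sK (sK a b) c = sK a (sK b c)" for a b c
      proof
        fix i
        have "sK (sK a b) c i = (\<Sum>l\<in>UNIV. sK a b l * sK (ebas l) c i)" by (rule linL)
        also have "\<dots> = (\<Sum>l\<in>UNIV. fps_nth (S' (fconst a) (fconst b) l) K * fps_nth (S' (ebas l) (fconst c) i) K)"
          by (simp add: sK_def fconst_ebas)
        also have "\<dots> = fps_nth (S' (S' (fconst a) (fconst b)) (fconst c) i) (K + K)"
          by (rule expandL[OF bS, symmetric]) (auto simp: vanL van)
        also have "\<dots> = fps_nth (S' (fconst a) (S' (fconst b) (fconst c)) i) (K + K)" by (simp add: assocF)
        also have "\<dots> = (\<Sum>l\<in>UNIV. fps_nth (S' (fconst b) (fconst c) l) K * fps_nth (S' (fconst a) (ebas l) i) K)"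
          by (rule expandR[OF bS]) (auto simp: vanR van)
        also have "\<dots> = (\<Sum>l\<in>UNIV. sK b c l * sK a (ebas l) i)"
          by (simp add: sK_def fconst_ebas)
        also have "\<dots> = sK a (sK b c) i" by (rule linR[symmetric])
        finally show "sK (sK a b) c i = sK a (sK b c) i" .
      qed
      show "Bm mu a (sK b c) = sK (Bm mu a b) c + sK b (Bm mu a c)" for a b c
      proof
        fix i
        have "Bm mu a (sK b c) i = (\<Sum>l\<in>UNIV. sK b c l * Bm mu a (ebas l) i)" by (rule linB)
        also have "\<dots> = (\<Sum>l\<in>UNIV. fps_nth (S' (fconst b) (fconst c) l) K * fps_nth (B' (fconst a) (ebas l) i) 0)"
          by (simp add: sK_def B0 fconst_ebas[symmetric])
        also have "\<dots> = fps_nth (B' (fconst a) (S' (fconst b) (fconst c)) i) (K + 0)"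
          by (rule expandR[OF bB, symmetric]) (auto simp: van)
        also have "\<dots> = fps_nth (S' (B' (fconst a) (fconst b)) (fconst c) i) (0 + K)
             + fps_nth (S' (fconst b) (B' (fconst a) (fconst c)) i) (0 + K)"
          by (simp add: leibF)
        also have "fps_nth (S' (B' (fconst a) (fconst b)) (fconst c) i) (0 + K)
            = (\<Sum>l\<in>UNIV. fps_nth (B' (fconst a) (fconst b) l) 0 * fps_nth (S' (ebas l) (fconst c) i) K)"
          by (rule expandL[OF bS]) (auto simp: vanL)
        also have "\<dots> = (\<Sum>l\<in>UNIV. Bm mu a b l * sK (ebas l) c i)"
          by (simp add: B0 sKe)
        also have "\<dots> = sK (Bm mu a b) c i" by (rule linL[symmetric])
        also have "fps_nth (S' (fconst b) (B' (fconst a) (fconst c)) i) (0 + K)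
            = (\<Sum>l\<in>UNIV. fps_nth (B' (fconst a) (fconst c) l) 0 * fps_nth (S' (fconst b) (ebas l) i) K)"
          by (rule expandR[OF bS]) (auto simp: vanR)
        also have "\<dots> = (\<Sum>l\<in>UNIV. Bm mu a c l * sK b (ebas l) i)"
          by (simp add: B0 sKe')
        also have "\<dots> = sK b (Bm mu a c) i" by (rule linR[symmetric])
        finally show "Bm mu a (sK b c) i = (sK (Bm mu a b) c + sK b (Bm mu a c)) i" by simp
      qed
    qed
    from PK obtain x y i where "fps_nth (S' (fconst x) (fconst y) i) K \<noteq> 0" by (auto simp: P_def)
    then have "sK x y i \<noteq> 0" by (simp add: sK_def)
    then show False using sK0 by simp
  qed
  have e0: "S' (ebas i) (ebas j) = 0" for i j using const_zero[of "ebas i" "ebas j"] by (simp add: fconst_ebas)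
  have "S' (ebas i) Y = 0" for i
  proof -
    have "S' (ebas i) Y = S' (ebas i) (\<Sum>j\<in>UNIV. smul (Y j) (ebas j))" by (subst vec_expand[of Y]) (rule refl)
    also have "\<dots> = 0" by (simp add: bl_sumR[OF bS] bl_smulR[OF bS] e0)
    finally show ?thesis .
  qed
  moreover have "S' X Y = S' (\<Sum>i\<in>UNIV. smul (X i) (ebas i)) Y" by (subst vec_expand[of X]) (rule refl)
  ultimately have "S' X Y = 0" by (simp add: bl_sumL[OF bS] bl_smulL[OF bS])
  then show ?thesis by (simp add: S'_def)
qed

end


theorem mainTheorem19:
  fixes mu :: "('n::finite \<Rightarrow> complex) \<Rightarrow> ('n \<Rightarrow> complex) \<Rightarrow> ('n \<Rightarrow> complex)"
    and T N :: "('n \<Rightarrow> complex) set"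
  assumes "blin mu" and "adm_poisson mu"
    and "lie_solvable (pbr mu)" and "lie_rigid (pbr mu)"
    and "max_ext_torus (pbr mu) T" and "nilradical (pbr mu) N"
    and "T \<inter> N = {vzero}" and "\<forall>x. \<exists>t\<in>T. \<exists>y\<in>N. x = vadd t y"
    and "\<forall>lam. is_root (pbr mu) T N lam \<longrightarrow> (\<exists>t\<in>T. lam t \<noteq> 0)"
  shows "cspan {ppr mu x y | x y. True} = {vzero} \<and> poisson_rigid mu"
proof -
  interpret H: hyps mu T N
    using assms(1,2,5,6,7,8,9) by (rule hyps.intro)
  have c1: "cspan {ppr mu x y | x y. True} = {vzero}"
    by (rule cspan_single0) (auto simp: H.ppr_zero vzero_eq)
  have "poisson_rigid mu"
    unfolding poisson_rigid_def
  proof (intro allI impI, elim conjE)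
    fix m' :: "('n \<Rightarrow> complex fps) \<Rightarrow> ('n \<Rightarrow> complex fps) \<Rightarrow> ('n \<Rightarrow> complex fps)"
    assume dm: "is_deformation mu m'" and am: "adm_poisson m'"
    have bm': "blin m'" using dm by (simp add: is_deformation_def)
    have S0: "Sm m' X Y = 0" for X Y by (rule H.def_S_zero[OF dm am])
    have anti: "m' Y X = - m' X Y" for X Y
      using S0[of X Y] by (simp only: Sm_def add_eq_0_iff)
    have Bd: "Bm m' X Y = smul 2 (m' X Y)" for X Y
    proof -
      have "Bm m' X Y = m' X Y + m' X Y" unfolding Bm_def using anti[of Y X] by (metis diff_minus_eq_add)
      then show ?thesis unfolding smul_def by (metis plus_fun_apply mult_2)
    qed
    have three_fps: "3 * (a::complex fps) = 0 \<Longrightarrow> a = 0" for a by (rule fps_num_cancel)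
    have lie: "is_lie m'"
      unfolding is_lie_def
    proof (intro conjI allI)
      show "blin m'" by (rule bm')
      show "m' x x = vzero" for x
      proof
        fix k
        have "m' x x k + m' x x k = 0" using S0[of x x] by (simp add: Sm_def fun_eq_iff)
        then have "2 * m' x x k = 0" by (metis mult_2)
        then have "m' x x k = 0" by (rule fps_num_cancel)
        then show "m' x x k = vzero k" by (simp add: vzero_def)
      qed
      show "vadd (vadd (m' x (m' y z)) (m' y (m' z x))) (m' z (m' x y)) = vzero" for x y z
      proof
        fix k
        have J: "Bm m' x (Bm m' y z) + Bm m' y (Bm m' z x) + Bm m' z (Bm m' x y) = 0"
          by (rule Bm_jac[OF bm' am three_fps])
        have "smul 4 (m' x (m' y z) + m' y (m' z x) + m' z (m' x y)) = 0"
          using J by (simp add: Bd bl_smulR[OF bm'] M.scale_right_distrib)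
        then have "4 * (m' x (m' y z) k + m' y (m' z x) k + m' z (m' x y) k) = 0"
          by (simp add: smul_def fun_eq_iff)
        then have "m' x (m' y z) k + m' y (m' z x) k + m' z (m' x y) k = 0"
          by (rule fps_num_cancel)
        then show "vadd (vadd (m' x (m' y z)) (m' y (m' z x))) (m' z (m' x y)) k = vzero k"
          by (simp add: vadd_def vzero_def)
      qed
    qed
    have "is_deformation (pbr mu) m'"
      using dm by (simp add: is_deformation_def H.pbr_mu)
    then have "def_isomorphic (pbr mu) m'"
      using assms(4) lie by (simp add: lie_rigid_def)
    then show "def_isomorphic mu m'" by (simp add: H.pbr_mu)
  qed
  with c1 show ?thesis by blast
qed


end
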